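(* Every BMDP $\mathcal B$ has an optimal static strategy: there is a static strategy $\sigma^*$ such that $\mathrm{ETotal}_*(q,\sigma^* )=\mathrm{ETotal}_*(q)$ for every type $q\in\mathcal T$.
   Context: A branching Markov decision process (BMDP) is a tuple $\mathcal B=(\mathcal T,A,p,c)$ where $\mathcal T$ is a finite set of types, $A$ is a finite set of actions, $p:\mathcal T\times A\to \mathrm{Dist}(\mathcal T^* )$ is a partial function assigning to some pairs $(q,a)$ a probability distribution with finite support over the set $\mathcal T^*$ of finite lists of types, and $c:\mathcal T\times A\to\mathbb R_{>0}$ is a cost function with strictly positive values. $A(q)$ denotes the (nonempty) set of actions $a$ for which $p(q,a)$ is defined. For a list $\alpha$, $|\alpha|$ is its length and $\alpha_i$ its $i$-th element; $\varepsilon$ is the empty list. Semantics: the BMDP induces an MDP whose states are lists $\alpha\in\mathcal T^*$. In state $\alpha$ the enabled actions are pairs $(i,a)$ with $1\le i\le|\alpha|$ and $a\in A(\alpha_i)$; taking $(i,a)$ incurs cost $c(\alpha_i,a)$ and moves to $\alpha_1\cdots\alpha_{i-1}\cdot\beta\cdot\alpha_{i+1}\cdots\alpha_{|\alpha|}$ with probability $p(\alpha_i,a)(\beta)$. The state $\varepsilon$ has no actions and is absorbing with no further cost. A strategy maps each finite history to a probability distribution over actions enabled in its last state; a strategy $\sigma$ and initial state $\alpha$ induce a probability measure on runs. $\mathrm{ETotal}_N(\alpha,\sigma)$ is the expected sum of costs in the first $N$ steps, $\mathrm{ETotal}_*(\alpha,\sigma)=\lim_{N\to\infty}\mathrm{ETotal}_N(\alpha,\sigma)\in[0,\infty]$,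 and $\mathrm{ETotal}_*(\alpha)=\inf_\sigma\mathrm{ETotal}_*(\alpha,\sigma)$ over all strategies. A strategy is static if there is a map $s:\mathcal T\to A$ with $s(q)\in A(q)$ such that, in every history whose last state $\alpha$ is nonempty, the strategy chooses (with probability 1) the action $(1,s(\alpha_1))$. *)

theory Defs
  imports "HOL-Probability.Probability_Mass_Function"
begin

(* A BMDP over a finite type of types 't and finite type of actions 'a is given by
   p :: 't => 'a => 't list pmf option  (partial; None = action not available)
   c :: 't => 'a => real                (cost). *)

definition acts :: "('t \<Rightarrow> 'a \<Rightarrow> 't list pmf option) \<Rightarrow> 't \<Rightarrow> 'a set" where
  "acts p q = {a. p q a \<noteq> None}"

definition wf_bmdp :: "('t \<Rightarrow> 'a \<Rightarrow> 't list pmf option) \<Rightarrow> ('t \<Rightarrow> 'a \<Rightarrow> real) \<Rightarrow> bool" where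
  "wf_bmdp p c \<longleftrightarrow>
     (\<forall>q. acts p q \<noteq> {}) \<and>
     (\<forall>q a d. p q a = Some d \<longrightarrow> finite (set_pmf d)) \<and>
     (\<forall>q a. c q a > 0)"

(* Histories of the induced MDP: initial state and the list of (action, successor state)
   steps taken so far. Actions are pairs (i, a) with 0-based position i. *)
type_synonym ('t, 'a) hist = "'t list \<times> ((nat \<times> 'a) \<times> 't list) list"

definition hlast :: "('t, 'a) hist \<Rightarrow> 't list" where
  "hlast h = (if snd h = [] then fst h else snd (last (snd h)))"

definition enabled :: "('t \<Rightarrow> 'a \<Rightarrow> 't list pmf option) \<Rightarrow> 't list \<Rightarrow> (nat \<times> 'a) set" where
  "enabled p \<alpha> = {(i, a). i < length \<alpha> \<and> a \<in> acts p (\<alpha> ! i)}"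

definition successor :: "'t list \<Rightarrow> nat \<Rightarrow> 't list \<Rightarrow> 't list" where
  "successor \<alpha> i \<beta> = take i \<alpha> @ \<beta> @ drop (Suc i) \<alpha>"

definition valid_strategy ::
  "('t \<Rightarrow> 'a \<Rightarrow> 't list pmf option) \<Rightarrow> (('t, 'a) hist \<Rightarrow> (nat \<times> 'a) pmf) \<Rightarrow> bool" where
  "valid_strategy p \<sigma> \<longleftrightarrow> (\<forall>h. hlast h \<noteq> [] \<longrightarrow> set_pmf (\<sigma> h) \<subseteq> enabled p (hlast h))"

definition is_static ::
  "('t \<Rightarrow> 'a \<Rightarrow> 't list pmf option) \<Rightarrow> (('t, 'a) hist \<Rightarrow> (nat \<times> 'a) pmf) \<Rightarrow> bool" where
  "is_static p \<sigma> \<longleftrightarrow> (\<exists>s. (\<forall>q. s q \<in> acts p q) \<and>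
      (\<forall>h. hlast h \<noteq> [] \<longrightarrow> \<sigma> h = return_pmf (0, s (hd (hlast h)))))"

(* Expected total cost of the first n steps, continuing from history h
   (unfolding of the expectation under the measure induced by the strategy). *)
primrec ETN ::
  "('t \<Rightarrow> 'a \<Rightarrow> 't list pmf option) \<Rightarrow> ('t \<Rightarrow> 'a \<Rightarrow> real) \<Rightarrow>
   (('t, 'a) hist \<Rightarrow> (nat \<times> 'a) pmf) \<Rightarrow> nat \<Rightarrow> ('t, 'a) hist \<Rightarrow> ennreal" where
  "ETN p c \<sigma> 0 h = 0"
| "ETN p c \<sigma> (Suc n) h =
     (let \<alpha> = hlast h in
      if \<alpha> = [] then 0 else
      (\<Sum>x\<in>set_pmf (\<sigma> h).
         ennreal (pmf (\<sigma> h) x) *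
         (ennreal (c (\<alpha> ! fst x) (snd x)) +
          (\<Sum>\<beta>\<in>set_pmf (the (p (\<alpha> ! fst x) (snd x))).
             ennreal (pmf (the (p (\<alpha> ! fst x) (snd x))) \<beta>) *
             ETN p c \<sigma> n (fst h, snd h @ [(x, successor \<alpha> (fst x) \<beta>)])))))"

definition ETotal_N where
  "ETotal_N p c n \<alpha> \<sigma> = ETN p c \<sigma> n (\<alpha>, [])"

definition ETotal_star where
  "ETotal_star p c \<alpha> \<sigma> = (SUP n. ETotal_N p c n \<alpha> \<sigma>)"

definition ETotal_opt where
  "ETotal_opt p c \<alpha> = (INF \<sigma> \<in> {\<sigma>. valid_strategy p \<sigma>}. ETotal_star p c \<alpha> \<sigma>)"

end

theory Submission imports Defs begin

definition gstep :: "('t \<Rightarrow> 'a \<Rightarrow> 't list pmf option) \<Rightarrow> ('t \<Rightarrow> 'a \<Rightarrow> real) \<Rightarrow>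
   ('t list \<Rightarrow> ennreal) \<Rightarrow> 't list \<Rightarrow> nat \<times> 'a \<Rightarrow> ennreal" where
  "gstep p c V \<alpha> x = ennreal (c (\<alpha> ! fst x) (snd x)) +
     (\<Sum>\<beta>\<in>set_pmf (the (p (\<alpha> ! fst x) (snd x))).
        ennreal (pmf (the (p (\<alpha> ! fst x) (snd x))) \<beta>) * V (successor \<alpha> (fst x) \<beta>))"

fun Lg :: "('t \<Rightarrow> 'a \<Rightarrow> 't list pmf option) \<Rightarrow> ('t \<Rightarrow> 'a \<Rightarrow> real) \<Rightarrow> nat \<Rightarrow> 't list \<Rightarrow> ennreal" where
  "Lg p c 0 \<alpha> = 0"
| "Lg p c (Suc n) \<alpha> = (if \<alpha> = [] then 0 else Min (gstep p c (Lg p c n) \<alpha> ` enabled p \<alpha>))"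

definition Dv where "Dv p c \<alpha> = (SUP n. Lg p c n \<alpha>)"

definition tstep :: "('t \<Rightarrow> 'a \<Rightarrow> 't list pmf option) \<Rightarrow> ('t \<Rightarrow> 'a \<Rightarrow> real) \<Rightarrow>
   ('t \<Rightarrow> ennreal) \<Rightarrow> 't \<Rightarrow> 'a \<Rightarrow> ennreal" where
  "tstep p c v q a = ennreal (c q a) +
     (\<Sum>\<beta>\<in>set_pmf (the (p q a)). ennreal (pmf (the (p q a)) \<beta>) * sum_list (map v \<beta>))"

fun uu :: "('t \<Rightarrow> 'a \<Rightarrow> 't list pmf option) \<Rightarrow> ('t \<Rightarrow> 'a \<Rightarrow> real) \<Rightarrow> nat \<Rightarrow> 't \<Rightarrow> ennreal" where
  "uu p c 0 q = 0"
| "uu p c (Suc k) q = Min (tstep p c (uu p c k) q ` acts p q)"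

definition mu where "mu p c q = (SUP k. uu p c k q)"

definition Psi where "Psi p c (\<alpha> :: ('t \<times> nat) list) = sum_list (map (\<lambda>(t,b). uu p c b t) \<alpha>)"

definition asucc :: "('t \<times> nat) list \<Rightarrow> nat \<Rightarrow> 't list \<Rightarrow> ('t \<times> nat) list" where
  "asucc \<alpha> i \<beta> = take i \<alpha> @ map (\<lambda>t. (t, snd (\<alpha>!i) - 1)) \<beta> @ drop (Suc i) \<alpha>"

lemma fix_gen:
  fixes G :: "'x \<Rightarrow> nat \<Rightarrow> ennreal"
  assumes "finite X" "X \<noteq> {}" "\<And>x. x \<in> X \<Longrightarrow> incseq (G x)"
    "\<And>n. Min ((\<lambda>x. G x n) ` X) \<le> d"
  shows "\<exists>x\<in>X. (SUP n. G x n) \<le> d"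
proof (rule ccontr)
  assume A: "\<not> ?thesis"
  have ev: "eventually (\<lambda>n. d < G x n) sequentially" if x: "x \<in> X" for x
  proof -
    have "d < (SUP n. G x n)" using A x by (meson not_le)
    then obtain n where n: "d < G x n" by (metis less_SUP_iff)
    have "\<forall>m\<ge>n. d < G x m"
    proof (intro allI impI)
      fix m assume "n \<le> m"
      hence "G x n \<le> G x m" by (rule incseqD[OF assms(3)[OF x]])
      thus "d < G x m" using n by (rule order.strict_trans2[rotated])
    qed
    thus ?thesis unfolding eventually_sequentially by blast
  qed
  have "eventually (\<lambda>n. \<forall>x\<in>X. d < G x n) sequentially"
    by (rule eventually_ball_finite[OF assms(1)]) (use ev in blast)
  then obtain n where n: "\<forall>x\<in>X. d < G x n" unfolding eventually_sequentially by blast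
  have "Min ((\<lambda>x. G x n) ` X) \<in> (\<lambda>x. G x n) ` X"
    using assms(1,2) by (intro Min_in) simp_all
  then obtain x where x: "x \<in> X" "Min ((\<lambda>x. G x n) ` X) = G x n" by blast
  have "d < Min ((\<lambda>x. G x n) ` X)" using n x by simp
  with assms(4)[of n] show False by (simp add: not_le[symmetric])
qed

locale bm =
  fixes p :: "'t::finite \<Rightarrow> 'a::finite \<Rightarrow> 't list pmf option"
    and c :: "'t \<Rightarrow> 'a \<Rightarrow> real"
  assumes wf: "wf_bmdp p c"
begin

lemma fin_enabled: "finite (enabled p \<alpha>)"
proof -
  have "enabled p \<alpha> \<subseteq> {..<length \<alpha>} \<times> UNIV" by (auto simp: enabled_def)
  thus ?thesis by (rule finite_subset) auto
qed

lemma enabled_ne: "\<alpha> \<noteq> [] \<Longrightarrow> enabled p \<alpha> \<noteq> {}"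
  using wf unfolding wf_bmdp_def enabled_def by (cases \<alpha>) force+

lemma acts_ne: "acts p q \<noteq> {}" using wf unfolding wf_bmdp_def by auto

lemma fin_acts: "finite (acts p q)" by simp

lemma fin_supp: "a \<in> acts p q \<Longrightarrow> finite (set_pmf (the (p q a)))"
  using wf unfolding wf_bmdp_def acts_def by auto

lemma sum_pmf_enn: "finite S \<Longrightarrow> set_pmf d \<subseteq> S \<Longrightarrow> (\<Sum>x\<in>S. ennreal (pmf d x)) = 1"
  by (simp add: sum_pmf_eq_1)

lemma sum_pmf_const: "finite (set_pmf d) \<Longrightarrow> (\<Sum>x\<in>set_pmf d. ennreal (pmf d x) * K) = K"
  by (simp add: sum_distrib_right[symmetric] sum_pmf_eq_1)

lemma cmin_ex: "\<exists>m>0. \<forall>q a. m \<le> c q a"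
proof -
  let ?m = "Min (range (\<lambda>(q,a). c q a))"
  have "?m \<in> range (\<lambda>(q,a). c q a)" by (intro Min_in) auto
  hence "?m > 0" using wf unfolding wf_bmdp_def by auto
  moreover have "\<forall>q a. ?m \<le> c q a" by (auto intro!: Min_le)
  ultimately show ?thesis by blast
qed

lemma Min_img_mono:
  assumes "finite X" "X \<noteq> {}" "\<And>x. x \<in> X \<Longrightarrow> f x \<le> (g x :: ennreal)"
  shows "Min (f ` X) \<le> Min (g ` X)"
proof -
  have "Min (g ` X) \<in> g ` X" using assms by (intro Min_in) auto
  then obtain x where x: "x \<in> X" "Min (g ` X) = g x" by auto
  have "Min (f ` X) \<le> f x" using assms x by (intro Min_le) auto
  also have "\<dots> \<le> g x" using assms x by auto
  finally show ?thesis using x by simp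
qed

lemma gstep_mono: "(\<And>\<beta>. V \<beta> \<le> W \<beta>) \<Longrightarrow> gstep p c V \<alpha> x \<le> gstep p c W \<alpha> x"
  unfolding gstep_def by (auto intro!: add_left_mono sum_mono mult_left_mono)

lemma Lg_Suc_mono: "Lg p c n \<alpha> \<le> Lg p c (Suc n) \<alpha>"
proof (induction n arbitrary: \<alpha>)
  case 0 then show ?case by simp
next
  case (Suc n)
  show ?case
  proof (cases "\<alpha> = []")
    case False
    then show ?thesis
      by (simp only: Lg.simps if_False)
         (intro Min_img_mono fin_enabled enabled_ne gstep_mono Suc.IH)
  qed simp
qed

lemma Lg_incseq: "incseq (\<lambda>n. Lg p c n \<alpha>)"
  by (intro incseq_SucI Lg_Suc_mono)

lemma ETN_ge:
  assumes "valid_strategy p \<sigma>"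
  shows "Lg p c n (hlast h) \<le> ETN p c \<sigma> n h"
proof (induction n arbitrary: h)
  case 0 then show ?case by simp
next
  case (Suc n)
  define \<alpha> where "\<alpha> = hlast h"
  show ?case
  proof (cases "\<alpha> = []")
    case True then show ?thesis by (simp add: \<alpha>_def[symmetric])
  next
    case False
    have sub: "set_pmf (\<sigma> h) \<subseteq> enabled p \<alpha>"
      using assms False unfolding valid_strategy_def \<alpha>_def by blast
    have fin: "finite (set_pmf (\<sigma> h))" using sub fin_enabled by (rule finite_subset)
    have "Lg p c (Suc n) \<alpha> = (\<Sum>x\<in>set_pmf (\<sigma> h). ennreal (pmf (\<sigma> h) x) * Lg p c (Suc n) \<alpha>)"
      using fin by (simp add: sum_pmf_const)
    also have "\<dots> \<le> (\<Sum>x\<in>set_pmf (\<sigma> h).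
         ennreal (pmf (\<sigma> h) x) *
         (ennreal (c (\<alpha> ! fst x) (snd x)) +
          (\<Sum>\<beta>\<in>set_pmf (the (p (\<alpha> ! fst x) (snd x))).
             ennreal (pmf (the (p (\<alpha> ! fst x) (snd x))) \<beta>) *
             ETN p c \<sigma> n (fst h, snd h @ [(x, successor \<alpha> (fst x) \<beta>)]))))"
    proof (intro sum_mono mult_left_mono)
      fix x assume x: "x \<in> set_pmf (\<sigma> h)"
      have "Lg p c (Suc n) \<alpha> = Min (gstep p c (Lg p c n) \<alpha> ` enabled p \<alpha>)"
        using False by simp
      also have "\<dots> \<le> gstep p c (Lg p c n) \<alpha> x"
        using x sub by (intro Min_le fin_enabled finite_imageI imageI) blast+
      also have "\<dots> \<le> (ennreal (c (\<alpha> ! fst x) (snd x)) +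
          (\<Sum>\<beta>\<in>set_pmf (the (p (\<alpha> ! fst x) (snd x))).
             ennreal (pmf (the (p (\<alpha> ! fst x) (snd x))) \<beta>) *
             ETN p c \<sigma> n (fst h, snd h @ [(x, successor \<alpha> (fst x) \<beta>)])))"
        unfolding gstep_def
      proof (intro add_left_mono sum_mono mult_left_mono)
        fix \<beta>
        show "Lg p c n (successor \<alpha> (fst x) \<beta>) \<le> ETN p c \<sigma> n (fst h, snd h @ [(x, successor \<alpha> (fst x) \<beta>)])"
          using Suc.IH[of "(fst h, snd h @ [(x, successor \<alpha> (fst x) \<beta>)])"] by (simp add: hlast_def)
      qed simp
      finally show "Lg p c (Suc n) \<alpha> \<le> \<dots>" .
    qed simp
    also have "\<dots> = ETN p c \<sigma> (Suc n) h"
      using False by (simp add: \<alpha>_def Let_def)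
    finally show ?thesis by (simp add: \<alpha>_def)
  qed
qed

lemma incseq_cmult_enn: "incseq f \<Longrightarrow> incseq (\<lambda>n. (k::ennreal) * f n)"
  unfolding incseq_def by (simp add: mult_left_mono)

lemma gstep_SUP:
  assumes "x \<in> enabled p \<alpha>"
  shows "gstep p c (Dv p c) \<alpha> x = (SUP n. gstep p c (Lg p c n) \<alpha> x)"
proof -
  let ?d = "the (p (\<alpha> ! fst x) (snd x))"
  have inc: "\<And>\<beta>. \<beta> \<in> set_pmf ?d \<Longrightarrow> incseq (\<lambda>n. ennreal (pmf ?d \<beta>) * Lg p c n (successor \<alpha> (fst x) \<beta>))"
    by (rule incseq_cmult_enn[OF Lg_incseq])
  have "(SUP n. gstep p c (Lg p c n) \<alpha> x) = ennreal (c (\<alpha> ! fst x) (snd x)) +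
     (SUP n. \<Sum>\<beta>\<in>set_pmf ?d. ennreal (pmf ?d \<beta>) * Lg p c n (successor \<alpha> (fst x) \<beta>))"
    unfolding gstep_def by (rule ennreal_SUP_add_right[symmetric]) simp
  also have "(SUP n. \<Sum>\<beta>\<in>set_pmf ?d. ennreal (pmf ?d \<beta>) * Lg p c n (successor \<alpha> (fst x) \<beta>))
      = (\<Sum>\<beta>\<in>set_pmf ?d. SUP n. ennreal (pmf ?d \<beta>) * Lg p c n (successor \<alpha> (fst x) \<beta>))"
    using inc by (rule ennreal_SUP_sum)
  also have "\<dots> = (\<Sum>\<beta>\<in>set_pmf ?d. ennreal (pmf ?d \<beta>) * Dv p c (successor \<alpha> (fst x) \<beta>))"
    unfolding Dv_def by (simp only: SUP_mult_left_ennreal)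
  finally show ?thesis unfolding gstep_def by (rule sym)
qed

lemma D_fix:
  assumes "\<alpha> \<noteq> []"
  shows "\<exists>x\<in>enabled p \<alpha>. gstep p c (Dv p c) \<alpha> x \<le> Dv p c \<alpha>"
proof -
  have "\<exists>x\<in>enabled p \<alpha>. (SUP n. gstep p c (Lg p c n) \<alpha> x) \<le> Dv p c \<alpha>"
  proof (rule fix_gen[OF fin_enabled enabled_ne[OF assms]])
    fix x show "incseq (\<lambda>n. gstep p c (Lg p c n) \<alpha> x)"
      using Lg_incseq by (auto simp: incseq_def intro!: gstep_mono)
  next
    fix n
    have "Min ((\<lambda>x. gstep p c (Lg p c n) \<alpha> x) ` enabled p \<alpha>) = Lg p c (Suc n) \<alpha>"
      using assms by simp
    also have "\<dots> \<le> Dv p c \<alpha>" unfolding Dv_def by (rule SUP_upper) simp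
    finally show "Min ((\<lambda>x. gstep p c (Lg p c n) \<alpha> x) ` enabled p \<alpha>) \<le> Dv p c \<alpha>" .
  qed
  thus ?thesis using gstep_SUP by simp
qed

lemma len_succ: "j < length \<alpha> \<Longrightarrow> length \<alpha> - 1 \<le> length (successor \<alpha> j \<beta>)"
  unfolding successor_def by simp

lemma Lg_len:
  assumes m: "\<And>q a. m \<le> c q a" "m > 0"
  shows "ennreal m * of_nat (min n (length \<alpha>)) \<le> Lg p c n \<alpha>"
proof (induction n arbitrary: \<alpha>)
  case 0 then show ?case by simp
next
  case (Suc n)
  show ?case
  proof (cases "\<alpha> = []")
    case True then show ?thesis by simp
  next
    case False
    have hx: "ennreal m * of_nat (min (Suc n) (length \<alpha>)) \<le> gstep p c (Lg p c n) \<alpha> x"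
      if x: "x \<in> enabled p \<alpha>" for x
    proof -
      let ?d = "the (p (\<alpha> ! fst x) (snd x))"
      have i: "fst x < length \<alpha>" "snd x \<in> acts p (\<alpha> ! fst x)" using x by (auto simp: enabled_def)
      have fin: "finite (set_pmf ?d)" using i fin_supp by blast
      have "ennreal m * of_nat (min (Suc n) (length \<alpha>)) =
            ennreal m + ennreal m * of_nat (min n (length \<alpha> - 1))"
      proof -
        have eq: "min (Suc n) (length \<alpha>) = Suc (min n (length \<alpha> - 1))" using False by (cases \<alpha>) auto
        show ?thesis by (simp only: eq of_nat_Suc distrib_left mult_1_right)
      qed
      also have "\<dots> \<le> ennreal (c (\<alpha> ! fst x) (snd x)) +
          (\<Sum>\<beta>\<in>set_pmf ?d. ennreal (pmf ?d \<beta>) * (ennreal m * of_nat (min n (length \<alpha> - 1))))"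
        unfolding sum_pmf_const[OF fin] by (intro add_right_mono ennreal_leI m(1))
      also have "\<dots> \<le> gstep p c (Lg p c n) \<alpha> x"
        unfolding gstep_def
      proof (intro add_left_mono sum_mono mult_left_mono)
        fix \<beta>
        have "ennreal m * of_nat (min n (length \<alpha> - 1)) \<le> ennreal m * of_nat (min n (length (successor \<alpha> (fst x) \<beta>)))"
        proof -
          have L: "length \<alpha> - 1 \<le> length (successor \<alpha> (fst x) \<beta>)"
            using i(1) by (rule len_succ)
          have "min n (length \<alpha> - 1) \<le> min n (length (successor \<alpha> (fst x) \<beta>))"
            by (rule min.mono[OF order_refl L])
          thus ?thesis by (rule mult_left_mono[OF of_nat_mono]) simp_all
        qed
        also have "\<dots> \<le> Lg p c n (successor \<alpha> (fst x) \<beta>)" by (rule Suc.IH)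
        finally show "ennreal m * of_nat (min n (length \<alpha> - 1)) \<le> Lg p c n (successor \<alpha> (fst x) \<beta>)" .
      qed simp
      finally show ?thesis .
    qed
    have "ennreal m * of_nat (min (Suc n) (length \<alpha>)) \<le> Min (gstep p c (Lg p c n) \<alpha> ` enabled p \<alpha>)"
      apply (rule Min_ge_iff[THEN iffD2])
        apply (rule finite_imageI, rule fin_enabled)
       apply (simp add: enabled_ne[OF False])
      using hx by blast
    moreover have "Lg p c (Suc n) \<alpha> = Min (gstep p c (Lg p c n) \<alpha> ` enabled p \<alpha>)"
      using False by simp
    ultimately show ?thesis by (simp only:)
  qed
qed

lemma D_len:
  assumes m: "\<And>q a. m \<le> c q a" "m > 0"
  shows "ennreal m * of_nat (length \<alpha>) \<le> Dv p c \<alpha>"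
proof -
  have "ennreal m * of_nat (length \<alpha>) \<le> Lg p c (length \<alpha>) \<alpha>" using Lg_len[OF m, of "length \<alpha>" \<alpha>] by simp
  also have "\<dots> \<le> Dv p c \<alpha>" unfolding Dv_def by (rule SUP_upper) simp
  finally show ?thesis .
qed

lemma tstep_mono: "(\<And>t. v t \<le> w t) \<Longrightarrow> tstep p c v q a \<le> tstep p c w q a"
  unfolding tstep_def
  by (intro add_left_mono sum_mono mult_left_mono sum_list_mono) simp_all

lemma uu_Suc_mono: "uu p c k q \<le> uu p c (Suc k) q"
proof (induction k arbitrary: q)
  case 0 then show ?case by simp
next
  case (Suc k)
  have "Min (tstep p c (uu p c k) q ` acts p q) \<le> Min (tstep p c (uu p c (Suc k)) q ` acts p q)"
    by (rule Min_img_mono[OF fin_acts acts_ne tstep_mono[OF Suc.IH]])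
  thus ?case by (simp only: uu.simps)
qed

lemma uu_incseq: "incseq (\<lambda>k. uu p c k q)"
  by (rule incseq_SucI) (rule uu_Suc_mono)

lemma uu_le: "k \<le> K \<Longrightarrow> uu p c k q \<le> uu p c K q"
  using incseqD[OF uu_incseq] by blast

lemma sum_list_SUP:
  fixes v :: "nat \<Rightarrow> 't \<Rightarrow> ennreal"
  assumes "\<And>t. incseq (\<lambda>k. v k t)"
  shows "sum_list (map (\<lambda>t. SUP k. v k t) \<beta>) = (SUP k. sum_list (map (v k) \<beta>))"
proof -
  have "sum_list (map (\<lambda>t. SUP k. v k t) \<beta>) = (\<Sum>j\<in>{0..<length \<beta>}. SUP k. v k (\<beta> ! j))"
    by (simp add: sum_list_sum_nth)
  also have "\<dots> = (SUP k. \<Sum>j\<in>{0..<length \<beta>}. v k (\<beta> ! j))"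
    by (rule ennreal_SUP_sum[symmetric]) (rule assms)
  also have "\<dots> = (SUP k. sum_list (map (v k) \<beta>))"
    by (simp add: sum_list_sum_nth)
  finally show ?thesis .
qed

lemma tstep_SUP:
  assumes "a \<in> acts p q"
  shows "tstep p c (mu p c) q a = (SUP k. tstep p c (uu p c k) q a)"
proof -
  let ?d = "the (p q a)"
  have inc1: "\<And>\<beta>. incseq (\<lambda>k. sum_list (map (uu p c k) \<beta>))"
    unfolding incseq_def by (auto intro!: sum_list_mono uu_le)
  have inc: "\<And>\<beta>. \<beta> \<in> set_pmf ?d \<Longrightarrow> incseq (\<lambda>k. ennreal (pmf ?d \<beta>) * sum_list (map (uu p c k) \<beta>))"
    by (rule incseq_cmult_enn[OF inc1])
  have "(SUP k. tstep p c (uu p c k) q a) = ennreal (c q a) +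
     (SUP k. \<Sum>\<beta>\<in>set_pmf ?d. ennreal (pmf ?d \<beta>) * sum_list (map (uu p c k) \<beta>))"
    unfolding tstep_def by (rule ennreal_SUP_add_right[symmetric]) simp
  also have "(SUP k. \<Sum>\<beta>\<in>set_pmf ?d. ennreal (pmf ?d \<beta>) * sum_list (map (uu p c k) \<beta>))
      = (\<Sum>\<beta>\<in>set_pmf ?d. SUP k. ennreal (pmf ?d \<beta>) * sum_list (map (uu p c k) \<beta>))"
    using inc by (rule ennreal_SUP_sum)
  also have "\<dots> = (\<Sum>\<beta>\<in>set_pmf ?d. ennreal (pmf ?d \<beta>) * (SUP k. sum_list (map (uu p c k) \<beta>)))"
    by (simp only: SUP_mult_left_ennreal)
  also have "\<dots> = (\<Sum>\<beta>\<in>set_pmf ?d. ennreal (pmf ?d \<beta>) * sum_list (map (mu p c) \<beta>))"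
    unfolding mu_def by (simp only: sum_list_SUP[OF uu_incseq])
  finally show ?thesis unfolding tstep_def by (rule sym)
qed

lemma mu_fix: "\<exists>a\<in>acts p q. tstep p c (mu p c) q a \<le> mu p c q"
proof -
  have "\<exists>a\<in>acts p q. (SUP k. tstep p c (uu p c k) q a) \<le> mu p c q"
  proof (rule fix_gen[OF fin_acts acts_ne])
    fix a show "incseq (\<lambda>k. tstep p c (uu p c k) q a)"
      unfolding incseq_def by (auto intro!: tstep_mono uu_le)
  next
    fix k
    have "Min ((\<lambda>a. tstep p c (uu p c k) q a) ` acts p q) = uu p c (Suc k) q"
      by simp
    also have "\<dots> \<le> mu p c q" unfolding mu_def by (rule SUP_upper) simp
    finally show "Min ((\<lambda>a. tstep p c (uu p c k) q a) ` acts p q) \<le> mu p c q" .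
  qed
  thus ?thesis using tstep_SUP by simp
qed

lemma sum_list_fin: "(\<And>t. v t < (top::ennreal)) \<Longrightarrow> sum_list (map v \<beta>) < top"
  by (induction \<beta>) (simp_all add: less_top[symmetric])

lemma uu_fin: "uu p c k q < top"
proof (induction k arbitrary: q)
  case 0 then show ?case by simp
next
  case (Suc k)
  have "Min (tstep p c (uu p c k) q ` acts p q) \<in> tstep p c (uu p c k) q ` acts p q"
    by (rule Min_in) (simp_all add: acts_ne)
  then obtain a where a: "a \<in> acts p q" "Min (tstep p c (uu p c k) q ` acts p q) = tstep p c (uu p c k) q a"
    by blast
  have fin: "finite (set_pmf (the (p q a)))" using fin_supp a(1) by blast
  have "tstep p c (uu p c k) q a < top"
    unfolding tstep_def using fin sum_list_fin[of "uu p c k", OF Suc.IH]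
    by (simp add: ennreal_mult_less_top)
  thus ?case using a(2) by (simp only: uu.simps)
qed

lemma fst_asucc: "i < length \<alpha> \<Longrightarrow> map fst (asucc \<alpha> i \<beta>) = successor (map fst \<alpha>) i \<beta>"
  unfolding asucc_def successor_def by (simp add: take_map drop_map o_def)

lemma budget_asucc:
  assumes "\<forall>z\<in>set \<alpha>. snd z \<le> K" "i < length \<alpha>"
  shows "\<forall>z\<in>set (asucc \<alpha> i \<beta>). snd z \<le> K"
proof -
  have "snd (\<alpha> ! i) \<le> K" using assms nth_mem by blast
  moreover have "set (take i \<alpha>) \<subseteq> set \<alpha>" "set (drop (Suc i) \<alpha>) \<subseteq> set \<alpha>"
    by (rule set_take_subset, rule set_drop_subset)
  ultimately show ?thesis using assms(1) unfolding asucc_def by fastforce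
qed

lemma Psi_split:
  assumes "i < length \<alpha>"
  shows "Psi p c \<alpha> = Psi p c (take i \<alpha>) + uu p c (snd (\<alpha>!i)) (fst (\<alpha>!i)) + Psi p c (drop (Suc i) \<alpha>)"
proof -
  have "Psi p c \<alpha> = Psi p c (take i \<alpha> @ \<alpha>!i # drop (Suc i) \<alpha>)"
    using id_take_nth_drop[OF assms] by (rule arg_cong[where f="Psi p c"])
  also have "\<dots> = Psi p c (take i \<alpha>) + uu p c (snd (\<alpha>!i)) (fst (\<alpha>!i)) + Psi p c (drop (Suc i) \<alpha>)"
    by (simp add: Psi_def case_prod_beta add.assoc)
  finally show ?thesis .
qed

lemma Psi_asucc:
  "Psi p c (asucc \<alpha> i \<beta>) = Psi p c (take i \<alpha>) + sum_list (map (uu p c (snd (\<alpha>!i) - 1)) \<beta>) + Psi p c (drop (Suc i) \<alpha>)"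
  by (simp add: Psi_def asucc_def o_def add.assoc)

lemma Psi_step:
  assumes i: "i < length \<alpha>" and a: "a \<in> acts p (fst (\<alpha>!i))"
  shows "Psi p c \<alpha> \<le> ennreal (c (fst (\<alpha>!i)) a) +
     (\<Sum>\<beta>\<in>set_pmf (the (p (fst (\<alpha>!i)) a)). ennreal (pmf (the (p (fst (\<alpha>!i)) a)) \<beta>) * Psi p c (asucc \<alpha> i \<beta>))"
proof -
  define q where "q = fst (\<alpha>!i)"
  define b where "b = snd (\<alpha>!i)"
  define d where "d = the (p q a)"
  define A where "A = Psi p c (take i \<alpha>) + Psi p c (drop (Suc i) \<alpha>)"
  define X where "X = (\<lambda>\<beta>. sum_list (map (uu p c (b - 1)) \<beta>))"
  have fin: "finite (set_pmf d)" unfolding d_def q_def using fin_supp a by blast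
  have 1: "Psi p c \<alpha> = uu p c b q + A"
    unfolding Psi_split[OF i] A_def b_def q_def by (simp add: ac_simps)
  have 2: "\<And>\<beta>. Psi p c (asucc \<alpha> i \<beta>) = X \<beta> + A"
    unfolding Psi_asucc A_def X_def b_def by (simp add: ac_simps)
  have "(\<Sum>\<beta>\<in>set_pmf d. ennreal (pmf d \<beta>) * Psi p c (asucc \<alpha> i \<beta>))
      = (\<Sum>\<beta>\<in>set_pmf d. ennreal (pmf d \<beta>) * X \<beta> + ennreal (pmf d \<beta>) * A)"
    unfolding 2 by (simp only: distrib_left)
  also have "\<dots> = (\<Sum>\<beta>\<in>set_pmf d. ennreal (pmf d \<beta>) * X \<beta>) + A"
    by (simp only: sum.distrib sum_pmf_const[OF fin])
  finally have 3: "(\<Sum>\<beta>\<in>set_pmf d. ennreal (pmf d \<beta>) * Psi p c (asucc \<alpha> i \<beta>))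
      = (\<Sum>\<beta>\<in>set_pmf d. ennreal (pmf d \<beta>) * X \<beta>) + A" .
  have 4: "uu p c b q \<le> tstep p c (uu p c (b - 1)) q a"
  proof (cases b)
    case 0 then show ?thesis by simp
  next
    case (Suc k)
    have "uu p c b q = Min (tstep p c (uu p c k) q ` acts p q)" by (simp add: Suc)
    also have "\<dots> \<le> tstep p c (uu p c k) q a"
      using a unfolding q_def by (intro Min_le finite_imageI fin_acts imageI)
    finally show ?thesis by (simp add: Suc)
  qed
  have "Psi p c \<alpha> \<le> tstep p c (uu p c (b - 1)) q a + A"
    unfolding 1 by (rule add_right_mono[OF 4])
  also have "\<dots> = ennreal (c q a) + ((\<Sum>\<beta>\<in>set_pmf d. ennreal (pmf d \<beta>) * X \<beta>) + A)"
    unfolding tstep_def d_def X_def by (simp only: add.assoc)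
  finally show ?thesis unfolding 3[unfolded d_def q_def] by (simp only: q_def d_def)
qed

lemma Psi_bound:
  assumes "\<forall>z\<in>set \<alpha>. snd z \<le> K" "\<And>t. uu p c K t \<le> ennreal U"
  shows "Psi p c \<alpha> \<le> ennreal U * of_nat (length \<alpha>)"
  using assms(1)
proof (induction \<alpha>)
  case Nil then show ?case by (simp add: Psi_def)
next
  case (Cons z \<alpha>)
  have "uu p c (snd z) (fst z) \<le> ennreal U"
    using Cons.prems uu_le[of "snd z" K] assms(2) order_trans by fastforce
  moreover have "Psi p c \<alpha> \<le> ennreal U * of_nat (length \<alpha>)" using Cons by simp
  ultimately have "uu p c (snd z) (fst z) + Psi p c \<alpha> \<le> ennreal U + ennreal U * of_nat (length \<alpha>)"
    by (rule add_mono)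
  moreover have "Psi p c (z # \<alpha>) = uu p c (snd z) (fst z) + Psi p c \<alpha>"
    by (simp add: Psi_def case_prod_beta)
  moreover have "ennreal U + ennreal U * of_nat (length \<alpha>) = ennreal U * of_nat (length (z # \<alpha>))"
    by (simp only: length_Cons of_nat_Suc distrib_left mult_1_right)
  ultimately show ?case by simp
qed

lemma mix:
  assumes l: "0 < l" "l \<le> 1"
    and base: "\<And>\<alpha>. \<forall>z\<in>set \<alpha>. snd z \<le> K \<Longrightarrow> ennreal l * Psi p c \<alpha> \<le> Dv p c (map fst \<alpha>)"
  shows "\<forall>z\<in>set \<alpha>. snd z \<le> K \<Longrightarrow>
    ennreal l * Psi p c \<alpha> + ennreal (1 - l) * Lg p c n (map fst \<alpha>) \<le> Dv p c (map fst \<alpha>)"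
proof (induction n arbitrary: \<alpha>)
  case 0 then show ?case using base[OF 0] by simp
next
  case (Suc n)
  show ?case
  proof (cases "\<alpha> = []")
    case True then show ?thesis by (simp add: Psi_def)
  next
    case False
    define \<alpha>' where "\<alpha>' = map fst \<alpha>"
    have ne: "\<alpha>' \<noteq> []" using False unfolding \<alpha>'_def by simp
    obtain x where x: "x \<in> enabled p \<alpha>'" and gx: "gstep p c (Dv p c) \<alpha>' x \<le> Dv p c \<alpha>'"
      using D_fix[OF ne] by blast
    obtain i a where xia: "x = (i, a)" by (cases x)
    have i: "i < length \<alpha>" and a: "a \<in> acts p (fst (\<alpha>!i))"
      using x unfolding xia enabled_def \<alpha>'_def by auto
    have nth: "\<alpha>' ! i = fst (\<alpha>!i)" unfolding \<alpha>'_def using i by simp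
    define d where "d = the (p (fst (\<alpha>!i)) a)"
    define c0 where "c0 = ennreal (c (fst (\<alpha>!i)) a)"
    define P where "P = (\<lambda>\<beta>. Psi p c (asucc \<alpha> i \<beta>))"
    define Q where "Q = (\<lambda>\<beta>. Lg p c n (successor \<alpha>' i \<beta>))"
    define L where "L = ennreal l"
    define M where "M = ennreal (1 - l)"
    have LM: "L + M = 1" unfolding L_def M_def using l by (simp add: ennreal_plus[symmetric])
    have gD: "gstep p c (Dv p c) \<alpha>' x = c0 + (\<Sum>\<beta>\<in>set_pmf d. ennreal (pmf d \<beta>) * Dv p c (successor \<alpha>' i \<beta>))"
      unfolding gstep_def xia c0_def d_def by (simp add: nth)
    have gL: "gstep p c (Lg p c n) \<alpha>' x = c0 + (\<Sum>\<beta>\<in>set_pmf d. ennreal (pmf d \<beta>) * Q \<beta>)"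
      unfolding gstep_def xia c0_def d_def Q_def by (simp add: nth)
    have IH: "L * P \<beta> + M * Q \<beta> \<le> Dv p c (successor \<alpha>' i \<beta>)" for \<beta>
    proof -
      have "\<forall>z\<in>set (asucc \<alpha> i \<beta>). snd z \<le> K" by (rule budget_asucc[OF Suc.prems i])
      from Suc.IH[OF this] show ?thesis
        unfolding L_def M_def P_def Q_def \<alpha>'_def fst_asucc[OF i] .
    qed
    have PS: "Psi p c \<alpha> \<le> c0 + (\<Sum>\<beta>\<in>set_pmf d. ennreal (pmf d \<beta>) * P \<beta>)"
      unfolding c0_def d_def P_def by (rule Psi_step[OF i a])
    have LS: "Lg p c (Suc n) \<alpha>' \<le> c0 + (\<Sum>\<beta>\<in>set_pmf d. ennreal (pmf d \<beta>) * Q \<beta>)"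
    proof -
      have "Lg p c (Suc n) \<alpha>' = Min (gstep p c (Lg p c n) \<alpha>' ` enabled p \<alpha>')" using ne by simp
      also have "\<dots> \<le> gstep p c (Lg p c n) \<alpha>' x" using x by (intro Min_le finite_imageI fin_enabled imageI)
      finally show ?thesis unfolding gL .
    qed
    have "L * Psi p c \<alpha> + M * Lg p c (Suc n) \<alpha>' \<le>
        L * (c0 + (\<Sum>\<beta>\<in>set_pmf d. ennreal (pmf d \<beta>) * P \<beta>)) + M * (c0 + (\<Sum>\<beta>\<in>set_pmf d. ennreal (pmf d \<beta>) * Q \<beta>))"
      by (intro add_mono mult_left_mono PS LS) simp_all
    also have "\<dots> = (L + M) * c0 + (\<Sum>\<beta>\<in>set_pmf d. ennreal (pmf d \<beta>) * (L * P \<beta> + M * Q \<beta>))"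
      by (simp add: algebra_simps sum_distrib_left sum.distrib)
    also have "\<dots> = c0 + (\<Sum>\<beta>\<in>set_pmf d. ennreal (pmf d \<beta>) * (L * P \<beta> + M * Q \<beta>))"
      by (simp only: LM mult_1)
    also have "\<dots> \<le> c0 + (\<Sum>\<beta>\<in>set_pmf d. ennreal (pmf d \<beta>) * Dv p c (successor \<alpha>' i \<beta>))"
      by (intro add_left_mono sum_mono mult_left_mono IH) simp
    also have "\<dots> \<le> Dv p c \<alpha>'" using gx unfolding gD .
    finally show ?thesis unfolding L_def M_def \<alpha>'_def .
  qed
qed

lemma D_ge_Psi:
  assumes bud: "\<forall>z\<in>set \<alpha>. snd z \<le> K"
  shows "Psi p c \<alpha> \<le> Dv p c (map fst \<alpha>)"
proof -
  obtain m where m: "m > 0" "\<And>q a. m \<le> c q a" using cmin_ex by blast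
  define U where "U = max m (Max (range (\<lambda>t. enn2real (uu p c K t))))"
  have U: "\<And>t. uu p c K t \<le> ennreal U"
  proof -
    fix t
    have "uu p c K t = ennreal (enn2real (uu p c K t))" using uu_fin by simp
    also have "\<dots> \<le> ennreal U" unfolding U_def
      by (intro ennreal_leI max.coboundedI2 Max_ge) simp_all
    finally show "uu p c K t \<le> ennreal U" .
  qed
  have Upos: "U > 0" "m \<le> U" unfolding U_def using m by auto
  define l where "l = m / U"
  have l: "0 < l" "l \<le> 1" unfolding l_def using Upos m by auto
  have lU: "l * U = m" unfolding l_def using Upos by simp
  have base: "ennreal l * Psi p c \<beta> \<le> Dv p c (map fst \<beta>)" if b: "\<forall>z\<in>set \<beta>. snd z \<le> K" for \<beta>
  proof -
    have "ennreal l * Psi p c \<beta> \<le> ennreal l * (ennreal U * of_nat (length \<beta>))"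
      by (intro mult_left_mono Psi_bound[OF b U]) simp
    also have "\<dots> = ennreal m * of_nat (length (map fst \<beta>))"
      using l Upos by (simp add: mult.assoc[symmetric] ennreal_mult[symmetric] lU)
    also have "\<dots> \<le> Dv p c (map fst \<beta>)" by (rule D_len[OF m(2) m(1)])
    finally show ?thesis .
  qed
  define D where "D = Dv p c (map fst \<alpha>)"
  define L where "L = ennreal l"
  define M where "M = ennreal (1 - l)"
  have LM: "L + M = 1" unfolding L_def M_def using l by (simp add: ennreal_plus[symmetric])
  have all: "\<And>n. L * Psi p c \<alpha> + M * Lg p c n (map fst \<alpha>) \<le> D"
    unfolding L_def M_def D_def by (rule mix[OF l base bud])
  have "L * Psi p c \<alpha> + M * D = (SUP n. L * Psi p c \<alpha> + M * Lg p c n (map fst \<alpha>))"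
    unfolding D_def Dv_def by (simp add: SUP_mult_left_ennreal ennreal_SUP_add_right)
  also have "\<dots> \<le> D" by (rule SUP_least) (rule all)
  finally have key: "L * Psi p c \<alpha> + M * D \<le> D" .
  show ?thesis
  proof (cases "D = top")
    case True then show ?thesis unfolding D_def by simp
  next
    case False
    have MD: "M * D \<noteq> top" using False unfolding M_def by (simp add: ennreal_mult_eq_top_iff)
    have "L * Psi p c \<alpha> + M * D \<le> L * D + M * D"
      using key by (simp add: distrib_right[symmetric] LM)
    hence "M * D + L * Psi p c \<alpha> \<le> M * D + L * D" by (simp only: add.commute)
    hence "L * Psi p c \<alpha> \<le> L * D" using MD by (simp only: ennreal_add_left_cancel_le) simp
    hence "Psi p c \<alpha> \<le> D" unfolding L_def using l
      by (subst (asm) ennreal_mult_le_mult_iff) simp_all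
    thus ?thesis unfolding D_def .
  qed
qed

lemma lower_bound:
  assumes "valid_strategy p \<sigma>"
  shows "mu p c q \<le> ETotal_star p c [q] \<sigma>"
  unfolding mu_def
proof (rule SUP_least)
  fix K
  have "uu p c K q = Psi p c [(q, K)]" by (simp add: Psi_def)
  also have "\<dots> \<le> Dv p c (map fst [(q, K)])" by (rule D_ge_Psi[of _ K]) simp
  also have "\<dots> = (SUP n. Lg p c n [q])" by (simp add: Dv_def)
  also have "\<dots> \<le> (SUP n. ETN p c \<sigma> n ([q], []))"
    by (intro SUP_mono) (use ETN_ge[OF assms, of _ "([q], [])"] in \<open>auto simp: hlast_def\<close>)
  also have "\<dots> = ETotal_star p c [q] \<sigma>" by (simp add: ETotal_star_def ETotal_N_def)
  finally show "uu p c K q \<le> ETotal_star p c [q] \<sigma>" .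
qed

lemma upper_bound:
  assumes s: "\<And>q. s q \<in> acts p q" "\<And>q. tstep p c (mu p c) q (s q) \<le> mu p c q"
  shows "ETN p c (\<lambda>h. return_pmf (0, s (hd (hlast h)))) n h \<le> sum_list (map (mu p c) (hlast h))"
proof (induction n arbitrary: h)
  case 0 then show ?case by simp
next
  case (Suc n)
  define \<sigma> where "\<sigma> = (\<lambda>h::('t,'a) hist. return_pmf (0::nat, s (hd (hlast h))))"
  show ?case
  proof (cases "hlast h")
    case Nil then show ?thesis by simp
  next
    case (Cons q r)
    define d where "d = the (p q (s q))"
    have fin: "finite (set_pmf d)" unfolding d_def using fin_supp s(1) by blast
    have "ETN p c \<sigma> (Suc n) h = ennreal (c q (s q)) +
        (\<Sum>\<beta>\<in>set_pmf d. ennreal (pmf d \<beta>) * ETN p c \<sigma> n (fst h, snd h @ [((0, s q), \<beta> @ r)]))"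
      using Cons by (simp add: Let_def successor_def \<sigma>_def d_def)
    also have "\<dots> \<le> ennreal (c q (s q)) +
        (\<Sum>\<beta>\<in>set_pmf d. ennreal (pmf d \<beta>) * (sum_list (map (mu p c) \<beta>) + sum_list (map (mu p c) r)))"
    proof (intro add_left_mono sum_mono mult_left_mono)
      fix \<beta>
      show "ETN p c \<sigma> n (fst h, snd h @ [((0, s q), \<beta> @ r)]) \<le> sum_list (map (mu p c) \<beta>) + sum_list (map (mu p c) r)"
        using Suc.IH[of "(fst h, snd h @ [((0, s q), \<beta> @ r)])"] unfolding \<sigma>_def by (simp add: hlast_def)
    qed simp
    also have "\<dots> = tstep p c (mu p c) q (s q) + sum_list (map (mu p c) r)"
      unfolding tstep_def d_def[symmetric]
      by (simp only: distrib_left sum.distrib sum_pmf_const[OF fin] add.assoc)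
    also have "\<dots> \<le> mu p c q + sum_list (map (mu p c) r)" by (rule add_right_mono[OF s(2)])
    also have "\<dots> = sum_list (map (mu p c) (hlast h))" using Cons by simp
    finally show ?thesis unfolding \<sigma>_def .
  qed
qed

end

theorem corollary1:
  fixes p :: "'t::finite \<Rightarrow> 'a::finite \<Rightarrow> 't list pmf option"
    and c :: "'t \<Rightarrow> 'a \<Rightarrow> real"
  assumes "wf_bmdp p c"
  shows "\<exists>\<sigma>. valid_strategy p \<sigma> \<and> is_static p \<sigma> \<and>
           (\<forall>q. ETotal_star p c [q] \<sigma> = ETotal_opt p c [q])"
proof -
  interpret bm p c by unfold_locales (rule assms)
  have "\<forall>q. \<exists>a. a \<in> acts p q \<and> tstep p c (mu p c) q a \<le> mu p c q" using mu_fix by blast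
  then obtain s where s: "\<And>q. s q \<in> acts p q" "\<And>q. tstep p c (mu p c) q (s q) \<le> mu p c q"
    by metis
  define \<sigma> where "\<sigma> = (\<lambda>h::('t,'a) hist. return_pmf (0::nat, s (hd (hlast h))))"
  have valid: "valid_strategy p \<sigma>"
    unfolding valid_strategy_def
  proof (intro allI impI)
    fix h :: "('t,'a) hist" assume ne: "hlast h \<noteq> []"
    have "hd (hlast h) = hlast h ! 0" using ne by (simp add: hd_conv_nth)
    thus "set_pmf (\<sigma> h) \<subseteq> enabled p (hlast h)"
      unfolding \<sigma>_def enabled_def using ne s(1) by auto
  qed
  have static: "is_static p \<sigma>" unfolding is_static_def \<sigma>_def using s(1) by blast
  have "ETotal_star p c [q] \<sigma> = ETotal_opt p c [q]" for q
  proof (rule antisym)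
    have "ETotal_star p c [q] \<sigma> \<le> mu p c q"
      unfolding ETotal_star_def ETotal_N_def
    proof (rule SUP_least)
      fix n
      show "ETN p c \<sigma> n ([q], []) \<le> mu p c q"
        using upper_bound[OF s, of n "([q], [])"] unfolding \<sigma>_def by (simp add: hlast_def)
    qed
    also have "\<dots> \<le> ETotal_opt p c [q]"
      unfolding ETotal_opt_def by (rule INF_greatest) (simp add: lower_bound)
    finally show "ETotal_star p c [q] \<sigma> \<le> ETotal_opt p c [q]" .
  next
    show "ETotal_opt p c [q] \<le> ETotal_star p c [q] \<sigma>"
      unfolding ETotal_opt_def by (rule INF_lower) (simp add: valid)
  qed
  thus ?thesis using valid static by blast
qed

end
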